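(* Let $\gamma > 1$ and let $m, j_0 \in \mathbb{N}$. Let $p_i$ denote the $i$-th prime and consider the radii $\mathcal{R} = \{r_j\}_{j\in\mathbb{N}}$, $r_j > 0$, defined by $r_j^2 = m + \prod_{j_0 \leq i \leq 2^{j^\gamma}} p_i$. Then the set of all primes can be written as $\mathbb{P} = \mathbb{P}_G \cup \mathbb{P}_B$ such that: for every $p\in\mathbb{P}_G$, $\{r_j^2 \bmod p\} \subset (\mathbb{Z}/p\mathbb{Z})^\times$; for every $\epsilon>0$ there is $C_\epsilon$ independent of $p$ with $\#\{r_j^2 \bmod p : j \in\mathbb{N}\} \leq C_\epsilon p^\epsilon$ (indeed this count is $\lesssim \log p$ for every prime $p$); and $\sum_{p \in \mathbb{P}_B} p^{-1} < \infty$.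
   Context: $\mathbb{P}$ denotes the set of primes; $(\mathbb{Z}/p\mathbb{Z})^\times$ the group of units mod $p$. *)

theory Defs
  imports "HOL-Analysis.Analysis" "HOL-Number_Theory.Number_Theory" "HOL-Library.Infinite_Set"
begin

text \<open>The i-th prime, indexed from 1: nth_prime 1 = 2, nth_prime 2 = 3, ...\<close>
definition nth_prime :: "nat \<Rightarrow> nat" where
  "nth_prime i = enumerate {p. prime p} (i - 1)"

definition rsq :: "real \<Rightarrow> nat \<Rightarrow> nat \<Rightarrow> nat \<Rightarrow> nat" where
  "rsq \<gamma> m j0 j = m + (\<Prod>i \<in> {i. j0 \<le> i \<and> real i \<le> 2 powr (real j powr \<gamma>)}. nth_prime i)"

end

theory Submission
  imports Defs
begin

lemma primes_inf: "infinite {p::nat. prime p}" using primes_infinite by simp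

lemma np_prime: "prime (nth_prime i)"
  unfolding nth_prime_def using enumerate_in_set[OF primes_inf] by simp

lemma np_mono_iff: "1 \<le> a \<Longrightarrow> 1 \<le> b \<Longrightarrow> nth_prime a < nth_prime b \<longleftrightarrow> a < b"
  unfolding nth_prime_def by (simp add: primes_inf less_diff_iff)

lemma np_mono_le_iff: "1 \<le> a \<Longrightarrow> 1 \<le> b \<Longrightarrow> nth_prime a \<le> nth_prime b \<longleftrightarrow> a \<le> b"
  using np_mono_iff by (meson not_le)

lemma enum_ge: "n + enumerate {p::nat. prime p} 0 \<le> enumerate {p::nat. prime p} n"
proof (induction n)
  case (Suc n)
  then show ?case using enumerate_step[OF primes_inf, of n] by simp
qed simp

lemma np_ge: "1 \<le> i \<Longrightarrow> i < nth_prime i"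
proof -
  assume "1 \<le> i"
  have "2 \<le> enumerate {p::nat. prime p} 0"
    using enumerate_in_set[OF primes_inf, of 0] prime_ge_2_nat by simp
  with enum_ge[of "i - 1"] \<open>1 \<le> i\<close> show ?thesis unfolding nth_prime_def by linarith
qed

lemma np_surj: "prime (q::nat) \<Longrightarrow> \<exists>k\<ge>1. nth_prime k = q"
proof -
  assume "prime q"
  then obtain n where "enumerate {p::nat. prime p} n = q"
    using enumerate_Ex[OF primes_inf] by blast
  then show ?thesis unfolding nth_prime_def by (intro exI[of _ "Suc n"]) simp
qed

lemma prod_primes_dvd:
  "finite A \<Longrightarrow> (\<forall>p\<in>A. prime p \<and> p dvd (n::nat)) \<Longrightarrow> \<Prod>A dvd n"
proof (induction A rule: finite_induct)
  case (insert p A)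
  have "\<not> p dvd \<Prod>A"
  proof
    assume "p dvd \<Prod>A"
    then obtain x where "x \<in> A" "p dvd x"
      using prime_dvd_prod_iff[OF insert(1), of p "\<lambda>x. x"] insert(4) by auto
    then have "p = x" using insert(4) by (simp add: primes_dvd_imp_eq)
    with insert(2) \<open>x \<in> A\<close> show False by simp
  qed
  then have "coprime p (\<Prod>A)" using insert(4) prime_imp_coprime by auto
  then show ?case using insert divides_mult by auto
qed simp

lemma binom_primes_dvd:
  assumes "prime p" "k + 1 < p" "p \<le> 2*k+1"
  shows "p dvd ((2*k+1) choose k)"
proof -
  have "fact k * fact (k+1) * ((2*k+1) choose k) = (fact (2*k+1) :: nat)"
    using binomial_fact_lemma[of k "2*k+1"] by (simp add: mult_2)
  moreover have "p dvd (fact (2*k+1) :: nat)" using prime_dvd_fact_iff assms by blast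
  ultimately have "p dvd fact k * fact (k+1) * ((2*k+1) choose k)" by simp
  moreover have "\<not> p dvd (fact k :: nat)"
  proof
    assume "p dvd (fact k::nat)" then have "p \<le> k" by (rule prime_dvd_fact_iff[OF assms(1), THEN iffD1])
    with assms(2) show False by simp
  qed
  moreover have "\<not> p dvd (fact (k+1) :: nat)"
  proof
    assume "p dvd (fact (k+1)::nat)" then have "p \<le> k+1" by (rule prime_dvd_fact_iff[OF assms(1), THEN iffD1])
    with assms(2) show False by simp
  qed
  ultimately show ?thesis using assms(1) by (metis prime_dvd_mult_iff)
qed

lemma primorial: "\<Prod>{p::nat. prime p \<and> p \<le> n} \<le> 8^n"
proof (induction n rule: less_induct)
  case (less n)
  show ?case
  proof (cases "n \<le> 2")
    case True
    then consider "n = 0" | "n = 1" | "n = 2" by linarith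
    then show ?thesis
    proof cases
      case 1
      then have e: "{p::nat. prime p \<and> p \<le> n} = {}" by (auto dest: prime_ge_2_nat)
      show ?thesis unfolding e by simp
    next
      case 2
      then have e: "{p::nat. prime p \<and> p \<le> n} = {}" by (auto dest: prime_ge_2_nat)
      show ?thesis unfolding e by simp
    next
      case 3
      then have e: "{p::nat. prime p \<and> p \<le> n} = {2}" by (auto dest: prime_ge_2_nat)
      show ?thesis unfolding e using 3 by simp
    qed
  next
    case False
    show ?thesis
    proof (cases "even n")
      case True
      then have np: "\<not> prime n" using False prime_odd_nat by fastforce
      have "{p::nat. prime p \<and> p \<le> n} = {p. prime p \<and> p \<le> n - 1}"
      proof (rule Collect_cong)
        fix p show "prime p \<and> p \<le> n \<longleftrightarrow> prime p \<and> p \<le> n - 1"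
          using np False by (cases "p = n") auto
      qed
      then have "\<Prod>{p::nat. prime p \<and> p \<le> n} \<le> 8^(n-1)" using less[of "n-1"] False by simp
      also have "\<dots> \<le> 8^n" by (simp add: power_increasing)
      finally show ?thesis .
    next
      case odd: False
      then obtain k where nk: "n = 2*k+1" by (metis oddE)
      with False have k1: "k \<ge> 1" by simp
      let ?A = "{p::nat. prime p \<and> p \<le> k+1}" and ?B = "{p::nat. prime p \<and> k+1 < p \<and> p \<le> n}"
      have fA: "finite ?A" and fB: "finite ?B" by auto
      have eq: "{p::nat. prime p \<and> p \<le> n} = ?A \<union> ?B" using nk by auto
      have "\<Prod>{p::nat. prime p \<and> p \<le> n} = \<Prod>?A * \<Prod>?B"
        unfolding eq by (rule prod.union_disjoint[OF fA fB]) auto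
      moreover have "\<Prod>?A \<le> 8^(k+1)" using less[of "k+1"] nk k1 by simp
      moreover have "\<Prod>?B \<le> 2^n"
      proof -
        have "\<Prod>?B dvd ((2*k+1) choose k)"
          using prod_primes_dvd[OF fB] binom_primes_dvd nk by auto
        then have "\<Prod>?B \<le> (2*k+1) choose k"
          by (rule dvd_imp_le) simp
        also have "\<dots> \<le> 2^n" unfolding nk by (rule binomial_le_pow2)
        finally show ?thesis .
      qed
      ultimately have "\<Prod>{p::nat. prime p \<and> p \<le> n} \<le> 8^(k+1) * 2^n"
        by (simp add: mult_mono)
      also have "(8::nat)^(k+1) * 2^n = 2^(3*k+3+n)"
        by (simp add: power_mult power_add)
      also have "\<dots> \<le> 2^(3*n)" using nk k1 by (intro power_increasing) auto
      also have "\<dots> = 8^n" by (simp add: power_mult)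
      finally show ?thesis .
    qed
  qed
qed

lemma sum_UN_le_nonneg:
  fixes f :: "'a \<Rightarrow> real"
  assumes "finite I" "\<And>i. i \<in> I \<Longrightarrow> finite (A i)" "\<And>x. f x \<ge> 0"
  shows "sum f (\<Union>i\<in>I. A i) \<le> (\<Sum>i\<in>I. sum f (A i))"
  using assms
proof (induction I rule: finite_induct)
  case (insert i I)
  have fin: "finite (\<Union>i\<in>I. A i)" using insert by auto
  have "sum f (\<Union>i\<in>insert i I. A i) = sum f (A i \<union> (\<Union>i\<in>I. A i))" by simp
  also have "\<dots> \<le> sum f (A i) + sum f (\<Union>i\<in>I. A i)"
    using sum_Un[OF insert(4)[of i] fin, of f] sum_nonneg[of "A i \<inter> (\<Union>i\<in>I. A i)" f] insert(5) by simp
  also have "\<dots> \<le> sum f (A i) + (\<Sum>i\<in>I. sum f (A i))" using insert by simp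
  finally show ?case using insert by simp
qed simp

definition Iset :: "real \<Rightarrow> nat \<Rightarrow> nat \<Rightarrow> nat set" where
  "Iset \<gamma> j0 j = {i. j0 \<le> i \<and> real i \<le> 2 powr (real j powr \<gamma>)}"

definition Sset :: "real \<Rightarrow> nat \<Rightarrow> nat \<Rightarrow> nat \<Rightarrow> nat set" where
  "Sset \<gamma> m j0 j = {q. prime q \<and> q dvd rsq \<gamma> m j0 j \<and> (\<forall>i\<in>Iset \<gamma> j0 j. nth_prime i < q)
      \<and> 2 powr (real j powr \<gamma>) < real q}"

lemma rsq_eq: "rsq \<gamma> m j0 j = m + prod nth_prime (Iset \<gamma> j0 j)"
  by (simp add: rsq_def Iset_def)

lemma Iset_fin: "finite (Iset \<gamma> j0 j)"
proof (rule finite_subset)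
  show "Iset \<gamma> j0 j \<subseteq> {..nat \<lceil>2 powr (real j powr \<gamma>)\<rceil>}"
  proof
    fix i assume "i \<in> Iset \<gamma> j0 j"
    then have "real i \<le> 2 powr (real j powr \<gamma>)" by (simp add: Iset_def)
    also have "\<dots> \<le> real (nat \<lceil>2 powr (real j powr \<gamma>)\<rceil>)" by (rule real_nat_ceiling_ge)
    finally show "i \<in> {..nat \<lceil>2 powr (real j powr \<gamma>)\<rceil>}" by simp
  qed
qed simp

lemma rsq_pos: "1 \<le> m \<Longrightarrow> 0 < rsq \<gamma> m j0 j"
  by (simp add: rsq_eq)

lemma Sset_fin: "1 \<le> m \<Longrightarrow> finite (Sset \<gamma> m j0 j)"
proof (rule finite_subset)
  assume "1 \<le> m"
  show "Sset \<gamma> m j0 j \<subseteq> {..rsq \<gamma> m j0 j}"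
    using dvd_imp_le rsq_pos[OF \<open>1 \<le> m\<close>] by (auto simp: Sset_def)
qed simp

lemma np_inj: "1 \<le> j0 \<Longrightarrow> inj_on nth_prime (Iset \<gamma> j0 j)"
proof (rule inj_onI)
  fix a b assume "1 \<le> j0" "a \<in> Iset \<gamma> j0 j" "b \<in> Iset \<gamma> j0 j" "nth_prime a = nth_prime b"
  then have "1 \<le> a" "1 \<le> b" by (auto simp: Iset_def)
  with \<open>nth_prime a = nth_prime b\<close> show "a = b"
    using np_mono_iff by (metis less_irrefl linorder_neqE_nat)
qed

lemma jg_ge1: "1 < \<gamma> \<Longrightarrow> 1 \<le> j \<Longrightarrow> 1 \<le> real j powr \<gamma>"
proof -
  assume "1 < \<gamma>" "1 \<le> j"
  have "(1::real) = 1 powr \<gamma>" by simp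
  also have "\<dots> \<le> real j powr \<gamma>" using \<open>1 < \<gamma>\<close> \<open>1 \<le> j\<close> by (intro powr_mono2) auto
  finally show ?thesis .
qed

lemma S_bound:
  assumes g: "\<gamma> > 1" and m: "m \<ge> 1" and j0: "j0 \<ge> 1" and j: "j \<ge> 1"
  shows "(\<Sum>q\<in>Sset \<gamma> m j0 j. 1 / real q) \<le> (ln (real m + 1) + ln 8) / (ln 2 * real j powr \<gamma>)"
proof (cases "Sset \<gamma> m j0 j = {}")
  case True
  have "0 \<le> (ln (real m + 1) + ln 8) / (ln 2 * real j powr \<gamma>)"
    by (intro divide_nonneg_nonneg add_nonneg_nonneg mult_nonneg_nonneg) auto
  then show ?thesis using True by simp
next
  case False
  define S where "S = Sset \<gamma> m j0 j"
  define I where "I = Iset \<gamma> j0 j"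
  define L where "L = (2::real) powr (real j powr \<gamma>)"
  have fS: "finite S" using Sset_fin m S_def by simp
  define q0 where "q0 = Min S"
  have q0S: "q0 \<in> S" using fS False S_def q0_def by simp
  have q0le: "\<And>q. q \<in> S \<Longrightarrow> q0 \<le> q" using fS q0_def by simp
  have jg: "1 \<le> real j powr \<gamma>" using jg_ge1 g j by simp
  have L2: "2 \<le> L"
  proof -
    have "(2::real) = 2 powr 1" by simp
    also have "\<dots> \<le> L" unfolding L_def using jg by (intro powr_mono) auto
    finally show ?thesis .
  qed
  have q0L: "L < real q0" using q0S by (simp add: S_def Sset_def L_def)
  have Pr_le: "prod nth_prime I \<le> 8^q0"
  proof -
    have "prod nth_prime I = prod (\<lambda>x. x) (nth_prime ` I)"
      using prod.reindex[OF np_inj[OF j0], of "\<lambda>x. x" \<gamma> j] I_def by simp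
    also have "\<dots> \<le> \<Prod>{p::nat. prime p \<and> p \<le> q0}"
    proof (rule dvd_imp_le)
      have sub: "nth_prime ` I \<subseteq> {p. prime p \<and> p \<le> q0}"
        using q0S np_prime by (auto simp: S_def Sset_def I_def less_imp_le)
      show "prod (\<lambda>x. x) (nth_prime ` I) dvd \<Prod>{p::nat. prime p \<and> p \<le> q0}"
        by (rule prod_dvd_prod_subset[OF _ sub]) simp
      show "0 < \<Prod>{p::nat. prime p \<and> p \<le> q0}"
        by (rule prod_pos) (auto dest: prime_gt_0_nat)
    qed
    also have "\<dots> \<le> 8^q0" by (rule primorial)
    finally show ?thesis .
  qed
  have prodS: "\<Prod>S dvd rsq \<gamma> m j0 j"
    by (rule prod_primes_dvd[OF fS]) (auto simp: S_def Sset_def)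
  have "q0 ^ card S = (\<Prod>q\<in>S. q0)" by simp
  also have "\<dots> \<le> \<Prod>S" by (rule prod_mono) (use q0le in auto)
  also have "\<dots> \<le> rsq \<gamma> m j0 j" by (rule dvd_imp_le[OF prodS rsq_pos[OF m]])
  also have "\<dots> \<le> m + 8^q0" using Pr_le by (simp add: rsq_eq I_def)
  finally have A: "q0 ^ card S \<le> m + 8^q0" .
  have q0pos: "(2::real) < real q0" using q0L L2 by simp
  have "real (q0 ^ card S) \<le> real (m + 8^q0)" using A by (simp only: of_nat_le_iff)
  then have "real q0 ^ card S \<le> real m + 8^q0" by simp
  also have "\<dots> \<le> (real m + 1) * 8^q0"
  proof -
    have "(1::real) \<le> 8^q0" by simp
    then have "real m \<le> real m * 8^q0" using mult_left_mono[of 1 "8^q0" "real m"] by simp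
    then show ?thesis by (simp add: algebra_simps)
  qed
  finally have B: "real q0 ^ card S \<le> (real m + 1) * 8^q0" .
  have C: "real (card S) * ln (real q0) \<le> ln (real m + 1) + real q0 * ln 8"
  proof -
    have "ln (real q0 ^ card S) \<le> ln ((real m + 1) * 8^q0)"
      by (rule ln_le_cancel_iff[THEN iffD2]) (use B q0pos in \<open>auto intro: mult_pos_pos\<close>)
    moreover have "ln (real q0 ^ card S) = real (card S) * ln (real q0)" using q0pos by (simp add: ln_realpow)
    moreover have "ln ((real m + 1) * 8^q0) = ln (real m + 1) + real q0 * ln 8"
      by (simp add: ln_mult ln_realpow)
    ultimately show ?thesis by linarith
  qed
  have "(\<Sum>q\<in>S. 1 / real q) \<le> (\<Sum>q\<in>S. 1 / real q0)"
  proof (rule sum_mono)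
    fix q assume "q \<in> S"
    then have "real q0 \<le> real q" using q0le by simp
    then show "1 / real q \<le> 1 / real q0" by (rule divide_left_mono) (use q0pos \<open>real q0 \<le> real q\<close> in auto)
  qed
  also have "\<dots> = real (card S) / real q0" by simp
  also have "\<dots> \<le> (ln (real m + 1) + ln 8) / ln (real q0)"
  proof -
    have lq: "0 < ln (real q0)" using q0pos by simp
    have a0: "0 \<le> ln (real m + 1)" by simp
    have "real (card S) / real q0 \<le> (ln (real m + 1) + real q0 * ln 8) / (real q0 * ln (real q0))"
      using C lq q0pos by (simp add: field_simps)
    also have "\<dots> = ln (real m + 1) / (real q0 * ln (real q0)) + ln 8 / ln (real q0)"
      using lq q0pos by (simp add: field_simps)
    also have "ln (real m + 1) / (real q0 * ln (real q0)) \<le> ln (real m + 1) / ln (real q0)"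
      using lq q0pos a0 by (intro divide_left_mono) (auto simp: mult_le_cancel_right1 intro: mult_pos_pos)
    finally show ?thesis by (simp add: add_divide_distrib)
  qed
  also have "\<dots> \<le> (ln (real m + 1) + ln 8) / (ln 2 * real j powr \<gamma>)"
  proof (rule divide_left_mono)
    have "ln 2 * real j powr \<gamma> = ln L" unfolding L_def by (simp add: ln_powr)
    also have "\<dots> \<le> ln (real q0)" using q0L L2 by simp
    finally show "ln 2 * real j powr \<gamma> \<le> ln (real q0)" .
    show "0 \<le> ln (real m + 1) + ln 8" by simp
    show "0 < ln (real q0) * (ln 2 * real j powr \<gamma>)" using q0pos jg j by (intro mult_pos_pos) auto
  qed
  finally show ?thesis by (simp add: S_def)
qed

lemma key_ndvd:
  assumes j0: "j0 \<ge> 1" and m: "m \<ge> 1" and q: "prime q" and qM: "q > max m (nth_prime j0)"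
    and qS: "q \<notin> Sset \<gamma> m j0 j"
  shows "\<not> q dvd rsq \<gamma> m j0 j"
proof
  assume d: "q dvd rsq \<gamma> m j0 j"
  obtain k where k1: "k \<ge> 1" and kq: "nth_prime k = q" using np_surj[OF q] by blast
  have "nth_prime j0 < nth_prime k" using qM kq by simp
  then have kj0: "j0 < k" using np_mono_iff[OF j0 k1] by simp
  have "\<not> (\<forall>i\<in>Iset \<gamma> j0 j. nth_prime i < q) \<or> \<not> 2 powr (real j powr \<gamma>) < real q"
    using qS q d by (auto simp: Sset_def)
  then have kI: "k \<in> Iset \<gamma> j0 j"
  proof
    assume "\<not> (\<forall>i\<in>Iset \<gamma> j0 j. nth_prime i < q)"
    then obtain i where iI: "i \<in> Iset \<gamma> j0 j" and "q \<le> nth_prime i" by (auto simp: not_less)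
    then have "i \<ge> 1" using j0 by (simp add: Iset_def)
    with \<open>q \<le> nth_prime i\<close> kq k1 have "k \<le> i" using np_mono_le_iff by metis
    with iI kj0 show ?thesis by (auto simp: Iset_def)
  next
    assume "\<not> 2 powr (real j powr \<gamma>) < real q"
    moreover have "k < q" using np_ge[OF k1] kq by simp
    ultimately show ?thesis using kj0 by (auto simp: Iset_def)
  qed
  then have "q dvd prod nth_prime (Iset \<gamma> j0 j)" using kq Iset_fin dvd_prodI by metis
  then have "q dvd m" using d by (simp add: rsq_eq dvd_add_left_iff)
  then have "q \<le> m" using m by (simp add: dvd_imp_le)
  with qM show False by simp
qed

lemma mod_eq:
  assumes "j0 \<le> k" "real k \<le> 2 powr (real j powr \<gamma>)"
  shows "rsq \<gamma> m j0 j mod nth_prime k = m mod nth_prime k"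
proof -
  have "k \<in> Iset \<gamma> j0 j" using assms by (simp add: Iset_def)
  then have "nth_prime k dvd prod nth_prime (Iset \<gamma> j0 j)" using Iset_fin dvd_prodI by metis
  then obtain c where "prod nth_prime (Iset \<gamma> j0 j) = nth_prime k * c" by blast
  then show ?thesis by (simp add: rsq_eq)
qed

lemma card_bound:
  assumes g: "\<gamma> > 1" and j0: "j0 \<ge> 1" and q: "prime q"
  shows "finite ((\<lambda>j. rsq \<gamma> m j0 j mod q) ` {j. j \<ge> 1}) \<and>
    real (card ((\<lambda>j. rsq \<gamma> m j0 j mod q) ` {j. j \<ge> 1})) \<le> real (nth_prime j0) + 2 + log 2 (real q)"
proof -
  define A where "A = (\<lambda>j. rsq \<gamma> m j0 j mod q) ` {j. j \<ge> 1}"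
  have q2: "2 \<le> q" using q prime_ge_2_nat by blast
  have Asub: "A \<subseteq> {..<q}" using q2 by (auto simp: A_def)
  then have fA: "finite A" using finite_subset by blast
  have cardq: "card A \<le> q" using card_mono[OF _ Asub] by simp
  have lg: "1 \<le> log 2 (real q)" using q2 by simp
  obtain k where k1: "k \<ge> 1" and kq: "nth_prime k = q" using np_surj[OF q] by blast
  have "real (card A) \<le> real (nth_prime j0) + 2 + log 2 (real q)"
  proof (cases "k < j0")
    case True
    then have "q < nth_prime j0" using np_mono_iff[OF k1 j0] kq by simp
    then show ?thesis using cardq lg by linarith
  next
    case False
    define J where "J = {j::nat. 1 \<le> j \<and> real j < log 2 (real q)}"
    have Jsub: "J \<subseteq> {..<nat \<lceil>log 2 (real q)\<rceil>}"
    proof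
      fix j assume "j \<in> J"
      then have "real j < log 2 (real q)" by (simp add: J_def)
      also have "\<dots> \<le> real (nat \<lceil>log 2 (real q)\<rceil>)" by (rule real_nat_ceiling_ge)
      finally show "j \<in> {..<nat \<lceil>log 2 (real q)\<rceil>}" by simp
    qed
    have fJ: "finite J" using Jsub finite_subset by blast
    have cJ: "real (card J) \<le> log 2 (real q) + 1"
    proof -
      have "card J \<le> nat \<lceil>log 2 (real q)\<rceil>" using card_mono[OF _ Jsub] by simp
      then have "real (card J) \<le> real (nat \<lceil>log 2 (real q)\<rceil>)" by simp
      also have "\<dots> = of_int \<lceil>log 2 (real q)\<rceil>" using lg by simp
      also have "\<dots> \<le> log 2 (real q) + 1" by simp
      finally show ?thesis .
    qed
    have "A \<subseteq> insert (m mod q) ((\<lambda>j. rsq \<gamma> m j0 j mod q) ` J)"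
    proof
      fix x assume "x \<in> A"
      then obtain j where j: "j \<ge> 1" and x: "x = rsq \<gamma> m j0 j mod q" by (auto simp: A_def)
      show "x \<in> insert (m mod q) ((\<lambda>j. rsq \<gamma> m j0 j mod q) ` J)"
      proof (cases "real j < log 2 (real q)")
        case True then show ?thesis using j x by (auto simp: J_def)
      next
        case nt: False
        have "real j = real j powr 1" using j by simp
        also have "\<dots> \<le> real j powr \<gamma>" using j g by (intro powr_mono) auto
        finally have "log 2 (real q) \<le> real j powr \<gamma>" using nt by simp
        then have "2 powr (log 2 (real q)) \<le> 2 powr (real j powr \<gamma>)" by simp
        then have "real q \<le> 2 powr (real j powr \<gamma>)" using q2 by simp
        moreover have "k < q" using np_ge[OF k1] kq by simp
        ultimately have "real k \<le> 2 powr (real j powr \<gamma>)" by simp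
        then have "x = m mod q" using mod_eq[of j0 k j \<gamma> m] False x kq by simp
        then show ?thesis by simp
      qed
    qed
    then have "card A \<le> card (insert (m mod q) ((\<lambda>j. rsq \<gamma> m j0 j mod q) ` J))"
      using fJ by (intro card_mono) auto
    also have "\<dots> \<le> Suc (card ((\<lambda>j. rsq \<gamma> m j0 j mod q) ` J))"
      using fJ by (simp add: card_insert_if)
    also have "\<dots> \<le> Suc (card J)" using card_image_le[OF fJ] by simp
    finally have "real (card A) \<le> 1 + real (card J)" by simp
    then show ?thesis using cJ by simp
  qed
  then show ?thesis using fA by (simp add: A_def)
qed

lemma ln_le_powr: "0 < (\<epsilon>::real) \<Longrightarrow> 0 < (x::real) \<Longrightarrow> ln x \<le> x powr \<epsilon> / \<epsilon>"
proof -
  assume e: "0 < \<epsilon>" and x: "0 < x"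
  have "\<epsilon> * ln x = ln (x powr \<epsilon>)" by simp
  also have "\<dots> \<le> x powr \<epsilon> - 1" using x by (intro ln_le_minus_one) simp
  finally have "\<epsilon> * ln x \<le> x powr \<epsilon>" by simp
  then show ?thesis using e by (simp add: field_simps)
qed

theorem theorem2:
  fixes \<gamma> :: real and m j0 :: nat
  assumes "\<gamma> > 1" and "m \<ge> 1" and "j0 \<ge> 1"
  shows "\<exists>PG PB :: nat set.
     {p. prime p} = PG \<union> PB \<and>
     (\<forall>p\<in>PG. \<forall>j\<ge>1. int (rsq \<gamma> m j0 j) mod int p \<in> Units (residue_ring (int p))) \<and>
     (\<forall>\<epsilon>>0. \<exists>C::real. \<forall>p. prime p \<longrightarrow>
        finite ((\<lambda>j. rsq \<gamma> m j0 j mod p) ` {j. j \<ge> 1}) \<and>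
        real (card ((\<lambda>j. rsq \<gamma> m j0 j mod p) ` {j. j \<ge> 1})) \<le> C * real p powr \<epsilon>) \<and>
     (\<exists>C::real. \<forall>p. prime p \<longrightarrow>
        real (card ((\<lambda>j. rsq \<gamma> m j0 j mod p) ` {j. j \<ge> 1})) \<le> C * ln (real p)) \<and>
     (\<lambda>p. 1 / real p) summable_on PB"
proof -
  define P0 where "P0 = nth_prime j0"
  define M0 where "M0 = max m P0"
  define F0 where "F0 = {q. prime q \<and> q \<le> M0}"
  define PB where "PB = F0 \<union> (\<Union>j\<in>{j. j \<ge> 1}. Sset \<gamma> m j0 j)"
  define PG where "PG = {q. prime q} - PB"
  have PBp: "PB \<subseteq> {q. prime q}" by (auto simp: PB_def Sset_def F0_def)
  have U: "{p. prime p} = PG \<union> PB" using PBp by (auto simp: PG_def)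
  have units: "\<forall>p\<in>PG. \<forall>j\<ge>1. int (rsq \<gamma> m j0 j) mod int p \<in> Units (residue_ring (int p))"
  proof (intro ballI allI impI)
    fix p j :: nat assume pG: "p \<in> PG" and j: "1 \<le> j"
    have pp: "prime p" using pG by (simp add: PG_def)
    have pM: "p > M0" using pG pp by (auto simp: PG_def PB_def F0_def)
    have pS: "p \<notin> Sset \<gamma> m j0 j" using pG j by (auto simp: PG_def PB_def)
    have nd: "\<not> p dvd rsq \<gamma> m j0 j"
      using key_ndvd[OF assms(3) assms(2) pp _ pS] pM by (simp add: M0_def P0_def)
    have rp: "residues_prime p" using pp by (simp add: residues_prime_def)
    have Ueq: "Units (residue_ring (int p)) = {1..int (p - 1)}"
      by (rule residues_prime.res_prime_units_eq[OF rp])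
    have p0: "0 < int p" using pp prime_gt_0_nat by simp
    have "\<not> int p dvd int (rsq \<gamma> m j0 j)" using nd by simp
    then have ne: "int (rsq \<gamma> m j0 j) mod int p \<noteq> 0" by (simp add: dvd_eq_mod_eq_0)
    define x where "x = int (rsq \<gamma> m j0 j) mod int p"
    have "0 \<le> x" "x < int p" using p0 by (simp_all add: x_def)
    have ne': "x \<noteq> 0" using ne by (simp add: x_def)
    have ip: "int (p - 1) = int p - 1" using p0 by simp
    have "1 \<le> x" "x \<le> int (p - 1)" using \<open>0 \<le> x\<close> \<open>x < int p\<close> ne' ip by linarith+
    then show "int (rsq \<gamma> m j0 j) mod int p \<in> Units (residue_ring (int p))"
      unfolding Ueq atLeastAtMost_iff x_def[symmetric] by blast
  qed
  have cb: "\<And>p. prime p \<Longrightarrow> finite ((\<lambda>j. rsq \<gamma> m j0 j mod p) ` {j. j \<ge> 1}) \<and>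
    real (card ((\<lambda>j. rsq \<gamma> m j0 j mod p) ` {j. j \<ge> 1})) \<le> real P0 + 2 + log 2 (real p)"
    using card_bound[OF assms(1) assms(3)] P0_def by simp
  define C where "C = (real P0 + 3) / ln 2"
  have C0: "0 \<le> C" by (simp add: C_def)
  have third: "\<forall>p. prime p \<longrightarrow>
        real (card ((\<lambda>j. rsq \<gamma> m j0 j mod p) ` {j. j \<ge> 1})) \<le> C * ln (real p)"
  proof (intro allI impI)
    fix p :: nat assume pp: "prime p"
    have q2: "2 \<le> real p" using pp prime_ge_2_nat by simp
    define t where "t = ln (real p) / ln 2"
    have "ln 2 \<le> ln (real p)" using q2 by simp
    then have t1: "1 \<le> t" unfolding t_def by simp
    have "real (card ((\<lambda>j. rsq \<gamma> m j0 j mod p) ` {j. j \<ge> 1})) \<le> real P0 + 2 + t"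
      using cb[OF pp] by (simp add: log_def t_def)
    also have "\<dots> \<le> (real P0 + 3) * t"
    proof -
      have "(real P0 + 2) * 1 \<le> (real P0 + 2) * t" using t1 by (intro mult_left_mono) auto
      then show ?thesis by (simp add: algebra_simps)
    qed
    also have "\<dots> = C * ln (real p)" by (simp add: C_def t_def)
    finally show "real (card ((\<lambda>j. rsq \<gamma> m j0 j mod p) ` {j. j \<ge> 1})) \<le> C * ln (real p)" .
  qed
  have second: "\<forall>\<epsilon>>0. \<exists>C::real. \<forall>p. prime p \<longrightarrow>
        finite ((\<lambda>j. rsq \<gamma> m j0 j mod p) ` {j. j \<ge> 1}) \<and>
        real (card ((\<lambda>j. rsq \<gamma> m j0 j mod p) ` {j. j \<ge> 1})) \<le> C * real p powr \<epsilon>"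
  proof (intro allI impI)
    fix \<epsilon> :: real assume e: "\<epsilon> > 0"
    show "\<exists>C::real. \<forall>p. prime p \<longrightarrow>
        finite ((\<lambda>j. rsq \<gamma> m j0 j mod p) ` {j. j \<ge> 1}) \<and>
        real (card ((\<lambda>j. rsq \<gamma> m j0 j mod p) ` {j. j \<ge> 1})) \<le> C * real p powr \<epsilon>"
    proof (intro exI[of _ "C / \<epsilon>"] allI impI conjI)
      fix p :: nat assume pp: "prime p"
      show "finite ((\<lambda>j. rsq \<gamma> m j0 j mod p) ` {j. j \<ge> 1})" using cb[OF pp] by simp
      have p0: "0 < real p" using pp prime_gt_0_nat by simp
      have "real (card ((\<lambda>j. rsq \<gamma> m j0 j mod p) ` {j. j \<ge> 1})) \<le> C * ln (real p)"
        using third pp by simp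
      also have "\<dots> \<le> C * (real p powr \<epsilon> / \<epsilon>)"
        by (rule mult_left_mono[OF ln_le_powr[OF e p0] C0])
      also have "\<dots> = C / \<epsilon> * real p powr \<epsilon>" by simp
      finally show "real (card ((\<lambda>j. rsq \<gamma> m j0 j mod p) ` {j. j \<ge> 1})) \<le> C / \<epsilon> * real p powr \<epsilon>" .
    qed
  qed
  have summ: "(\<lambda>p. 1 / real p) summable_on PB"
  proof (rule nonneg_bdd_above_summable_on)
    show "\<And>x. x \<in> PB \<Longrightarrow> 0 \<le> 1 / real x" by simp
    define K where "K = (ln (real m + 1) + ln 8) / ln 2"
    have K0: "0 \<le> K" unfolding K_def by (intro divide_nonneg_nonneg add_nonneg_nonneg) auto
    have fF0: "finite F0" by (simp add: F0_def)
    have sumK: "summable (\<lambda>j::nat. real j powr (-\<gamma>))" using summable_real_powr_iff assms(1) by simp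
    show "bdd_above (sum (\<lambda>p. 1 / real p) ` {F. F \<subseteq> PB \<and> finite F})"
    proof (rule bdd_aboveI[of _ "sum (\<lambda>p. 1 / real p) F0 + K * suminf (\<lambda>j::nat. real j powr (-\<gamma>))"])
      fix y assume "y \<in> sum (\<lambda>p. 1 / real p) ` {F. F \<subseteq> PB \<and> finite F}"
      then obtain F where FPB: "F \<subseteq> PB" and fF: "finite F" and y: "y = sum (\<lambda>p. 1 / real p) F" by auto
      have "\<forall>q\<in>F - F0. \<exists>j. j \<ge> 1 \<and> q \<in> Sset \<gamma> m j0 j" using FPB by (auto simp: PB_def)
      then obtain jq where jq: "\<forall>q\<in>F - F0. jq q \<ge> 1 \<and> q \<in> Sset \<gamma> m j0 (jq q)" by metis
      define n where "n = Max (insert 0 (jq ` (F - F0)))"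
      define UU where "UU = (\<Union>j\<in>{1..n}. Sset \<gamma> m j0 j)"
      have Fsub: "F \<subseteq> F0 \<union> UU"
      proof
        fix q assume qF: "q \<in> F"
        show "q \<in> F0 \<union> UU"
        proof (cases "q \<in> F0")
          case False
          then have "jq q \<le> n" unfolding n_def using qF fF by (intro Max_ge) auto
          then show ?thesis using jq qF False by (auto simp: UU_def)
        qed simp
      qed
      have fU: "finite UU" using Sset_fin assms(2) by (auto simp: UU_def)
      have "y \<le> sum (\<lambda>p. 1 / real p) (F0 \<union> UU)"
        unfolding y by (rule sum_mono2[OF _ Fsub]) (use fF0 fU in auto)
      also have "\<dots> \<le> sum (\<lambda>p. 1 / real p) F0 + sum (\<lambda>p. 1 / real p) UU"
        using sum_Un[OF fF0 fU, of "\<lambda>p. 1 / real p"] sum_nonneg[of "F0 \<inter> UU" "\<lambda>p. 1 / real p"] by simp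
      also have "sum (\<lambda>p. 1 / real p) UU \<le> (\<Sum>j\<in>{1..n}. sum (\<lambda>p. 1 / real p) (Sset \<gamma> m j0 j))"
        unfolding UU_def by (rule sum_UN_le_nonneg) (use Sset_fin assms(2) in auto)
      also have "\<dots> \<le> (\<Sum>j\<in>{1..n}. K * real j powr (-\<gamma>))"
      proof (rule sum_mono)
        fix j assume "j \<in> {1..n}"
        then have j: "1 \<le> j" by simp
        have "sum (\<lambda>p. 1 / real p) (Sset \<gamma> m j0 j) \<le> (ln (real m + 1) + ln 8) / (ln 2 * real j powr \<gamma>)"
          by (rule S_bound[OF assms j])
        also have "\<dots> = K * real j powr (-\<gamma>)" by (simp add: K_def powr_minus_divide)
        finally show "sum (\<lambda>p. 1 / real p) (Sset \<gamma> m j0 j) \<le> K * real j powr (-\<gamma>)" .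
      qed
      also have "\<dots> = K * (\<Sum>j\<in>{1..n}. real j powr (-\<gamma>))" by (simp add: sum_distrib_left)
      also have "\<dots> \<le> K * suminf (\<lambda>j::nat. real j powr (-\<gamma>))"
        by (intro mult_left_mono K0 sum_le_suminf[OF sumK]) auto
      finally show "y \<le> sum (\<lambda>p. 1 / real p) F0 + K * suminf (\<lambda>j::nat. real j powr (-\<gamma>))" by simp
    qed
  qed
  show ?thesis
    by (rule exI[of _ PG], rule exI[of _ PB]) (use U units second third summ in blast)
qed

end
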